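(* Let $(\Lambda,d)$ be a finitely aligned $k$-graph. For $F,G\in S_\Lambda$ define $FG:=\bigcup_{(\lambda,\mu)\in F,(\xi,\eta)\in G}\{(\lambda\alpha,\eta\beta):(\alpha,\beta)\in\Lambda^{\min}(\mu,\xi)\}$. Then $FG\in S_\Lambda$, and this defines an associative multiplication on $S_\Lambda$.
   Context: A $k$-graph $(\Lambda,d)$ is a countable small category $\Lambda$ (objects identified with identity morphisms) with a functor $d:\Lambda\to\mathbb N^k$ satisfying unique factorization: whenever $d(\lambda)=m+n$ there are unique $\mu,\nu$ with $d(\mu)=m$, $d(\nu)=n$, $\lambda=\mu\nu$. $r,s$ are range/source. $\Lambda^{\min}(\lambda,\mu)=\{(\alpha,\beta):\lambda\alpha=\mu\beta,\ d(\lambda\alpha)=d(\lambda)\vee d(\mu)\}$ ($\vee$ = coordinatewise max); $\Lambda$ is finitely aligned if all $\Lambda^{\min}(\lambda,\mu)$ are finite. $\Lambda*_s\Lambda=\{(\lambda,\mu)\in\Lambda\times\Lambda:s(\lambda)=s(\mu)\}$. $S_\Lambda$ is the collection of all finite subsets $F\subseteq\Lambda*_s\Lambda$ such that for distinct $(\lambda,\mu),(\nu,\omega)\in F$ we have $\Lambda^{\min}(\lambda,\nu)=\emptyset$ and $\Lambda^{\min}(\mu,\omega)=\emptyset$ (the empty set belongs to $S_\Lambda$). *)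

theory Defs
  imports Main "HOL-Library.Countable_Set"
begin

text \<open>A k-graph is given by a set of morphisms M (objects identified with
identity morphisms), range and source maps r, s, a composition cmp (meaningful
when s x = r y), and a degree functor d into N^k, where N^k is represented as
functions nat => nat vanishing from index k on (ordered pointwise; join = sup).\<close>

definition is_object :: "'a set \<Rightarrow> ('a \<Rightarrow> 'a) \<Rightarrow> ('a \<Rightarrow> 'a) \<Rightarrow> 'a \<Rightarrow> bool" where
  "is_object M r s v \<longleftrightarrow> v \<in> M \<and> r v = v \<and> s v = v"

definition k_graph ::
  "nat \<Rightarrow> 'a set \<Rightarrow> ('a \<Rightarrow> 'a) \<Rightarrow> ('a \<Rightarrow> 'a) \<Rightarrow> ('a \<Rightarrow> 'a \<Rightarrow> 'a) \<Rightarrow> ('a \<Rightarrow> nat \<Rightarrow> nat) \<Rightarrow> bool" where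
  "k_graph k M r s cmp d \<longleftrightarrow>
     countable M \<and>
     (\<forall>x\<in>M. is_object M r s (r x) \<and> is_object M r s (s x)) \<and>
     (\<forall>x\<in>M. \<forall>y\<in>M. s x = r y \<longrightarrow>
        cmp x y \<in> M \<and> r (cmp x y) = r x \<and> s (cmp x y) = s y) \<and>
     (\<forall>x\<in>M. \<forall>y\<in>M. \<forall>z\<in>M. s x = r y \<and> s y = r z \<longrightarrow>
        cmp (cmp x y) z = cmp x (cmp y z)) \<and>
     (\<forall>x\<in>M. cmp (r x) x = x \<and> cmp x (s x) = x) \<and>
     (\<forall>x\<in>M. \<forall>i\<ge>k. d x i = 0) \<and>
     (\<forall>v. is_object M r s v \<longrightarrow> d v = (\<lambda>i. 0)) \<and>
     (\<forall>x\<in>M. \<forall>y\<in>M. s x = r y \<longrightarrow> d (cmp x y) = (\<lambda>i. d x i + d y i)) \<and>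
     (\<forall>x\<in>M. \<forall>m n. (\<forall>i\<ge>k. m i = 0) \<and> (\<forall>i\<ge>k. n i = 0) \<and> d x = (\<lambda>i. m i + n i) \<longrightarrow>
        (\<exists>!p. fst p \<in> M \<and> snd p \<in> M \<and> s (fst p) = r (snd p) \<and>
              d (fst p) = m \<and> d (snd p) = n \<and> x = cmp (fst p) (snd p)))"

definition Lmin ::
  "'a set \<Rightarrow> ('a \<Rightarrow> 'a) \<Rightarrow> ('a \<Rightarrow> 'a) \<Rightarrow> ('a \<Rightarrow> 'a \<Rightarrow> 'a) \<Rightarrow> ('a \<Rightarrow> nat \<Rightarrow> nat)
    \<Rightarrow> 'a \<Rightarrow> 'a \<Rightarrow> ('a \<times> 'a) set" where
  "Lmin M r s cmp d l u = {(a, b). a \<in> M \<and> b \<in> M \<and> s l = r a \<and> s u = r b \<and>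
      cmp l a = cmp u b \<and> d (cmp l a) = sup (d l) (d u)}"

definition finitely_aligned ::
  "'a set \<Rightarrow> ('a \<Rightarrow> 'a) \<Rightarrow> ('a \<Rightarrow> 'a) \<Rightarrow> ('a \<Rightarrow> 'a \<Rightarrow> 'a) \<Rightarrow> ('a \<Rightarrow> nat \<Rightarrow> nat) \<Rightarrow> bool" where
  "finitely_aligned M r s cmp d \<longleftrightarrow> (\<forall>l\<in>M. \<forall>u\<in>M. finite (Lmin M r s cmp d l u))"

definition s_pairs :: "'a set \<Rightarrow> ('a \<Rightarrow> 'a) \<Rightarrow> ('a \<times> 'a) set" where
  "s_pairs M s = {(l, u). l \<in> M \<and> u \<in> M \<and> s l = s u}"

definition S_Lambda ::
  "'a set \<Rightarrow> ('a \<Rightarrow> 'a) \<Rightarrow> ('a \<Rightarrow> 'a) \<Rightarrow> ('a \<Rightarrow> 'a \<Rightarrow> 'a) \<Rightarrow> ('a \<Rightarrow> nat \<Rightarrow> nat) \<Rightarrow> ('a \<times> 'a) set set" where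
  "S_Lambda M r s cmp d = {F. finite F \<and> F \<subseteq> s_pairs M s \<and>
     (\<forall>(l, u)\<in>F. \<forall>(n, w)\<in>F. (l, u) \<noteq> (n, w) \<longrightarrow>
        Lmin M r s cmp d l n = {} \<and> Lmin M r s cmp d u w = {})}"

definition S_mult ::
  "'a set \<Rightarrow> ('a \<Rightarrow> 'a) \<Rightarrow> ('a \<Rightarrow> 'a) \<Rightarrow> ('a \<Rightarrow> 'a \<Rightarrow> 'a) \<Rightarrow> ('a \<Rightarrow> nat \<Rightarrow> nat)
    \<Rightarrow> ('a \<times> 'a) set \<Rightarrow> ('a \<times> 'a) set \<Rightarrow> ('a \<times> 'a) set" where
  "S_mult M r s cmp d F G = (\<Union>(l, u)\<in>F. \<Union>(x, e)\<in>G.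
      {(cmp l a, cmp e b) | a b. (a, b) \<in> Lmin M r s cmp d u x})"

end

theory Submission
  imports Defs
begin


locale kg =
  fixes k :: nat and M :: "'a set" and r s :: "'a \<Rightarrow> 'a"
    and cmp :: "'a \<Rightarrow> 'a \<Rightarrow> 'a" and d :: "'a \<Rightarrow> nat \<Rightarrow> nat"
  assumes kg: "k_graph k M r s cmp d"
begin

lemma parts1:
  "\<forall>x\<in>M. \<forall>y\<in>M. s x = r y \<longrightarrow> cmp x y \<in> M \<and> r (cmp x y) = r x \<and> s (cmp x y) = s y"
  using kg unfolding k_graph_def by (elim conjE) assumption

lemma parts2:
  "\<forall>x\<in>M. \<forall>y\<in>M. \<forall>z\<in>M. s x = r y \<and> s y = r z \<longrightarrow> cmp (cmp x y) z = cmp x (cmp y z)"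
  using kg unfolding k_graph_def by (elim conjE) assumption

lemma parts3:
  "\<forall>x\<in>M. \<forall>i\<ge>k. d x i = 0"
  using kg unfolding k_graph_def by (elim conjE) assumption

lemma parts4:
  "\<forall>x\<in>M. \<forall>y\<in>M. s x = r y \<longrightarrow> d (cmp x y) = (\<lambda>i. d x i + d y i)"
  using kg unfolding k_graph_def by (elim conjE) assumption

lemma parts5:
  "\<forall>x\<in>M. \<forall>m n. (\<forall>i\<ge>k. m i = 0) \<and> (\<forall>i\<ge>k. n i = 0) \<and> d x = (\<lambda>i. m i + n i) \<longrightarrow>
        (\<exists>!p. fst p \<in> M \<and> snd p \<in> M \<and> s (fst p) = r (snd p) \<and>
              d (fst p) = m \<and> d (snd p) = n \<and> x = cmp (fst p) (snd p))"
  using kg unfolding k_graph_def by (elim conjE) assumption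

lemmas parts = parts1 parts2 parts3 parts4 parts5

lemma cmp_M: "x \<in> M \<Longrightarrow> y \<in> M \<Longrightarrow> s x = r y \<Longrightarrow> cmp x y \<in> M"
  using parts(1) by simp
lemma r_cmp: "x \<in> M \<Longrightarrow> y \<in> M \<Longrightarrow> s x = r y \<Longrightarrow> r (cmp x y) = r x"
  using parts(1) by simp
lemma s_cmp: "x \<in> M \<Longrightarrow> y \<in> M \<Longrightarrow> s x = r y \<Longrightarrow> s (cmp x y) = s y"
  using parts(1) by simp
lemma assoc: "x \<in> M \<Longrightarrow> y \<in> M \<Longrightarrow> z \<in> M \<Longrightarrow> s x = r y \<Longrightarrow> s y = r z \<Longrightarrow>
   cmp (cmp x y) z = cmp x (cmp y z)"
  using parts(2) by simp
lemma d_cmp: "x \<in> M \<Longrightarrow> y \<in> M \<Longrightarrow> s x = r y \<Longrightarrow> d (cmp x y) i = d x i + d y i"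
  using parts(4) by simp
lemma d_van: "x \<in> M \<Longrightarrow> k \<le> i \<Longrightarrow> d x i = 0"
  using parts(3) by simp
lemma fact: "x \<in> M \<Longrightarrow> \<forall>i\<ge>k. m i = 0 \<Longrightarrow> \<forall>i\<ge>k. n i = 0 \<Longrightarrow> d x = (\<lambda>i. m i + n i) \<Longrightarrow>
   (\<exists>!p. fst p \<in> M \<and> snd p \<in> M \<and> s (fst p) = r (snd p) \<and>
              d (fst p) = m \<and> d (snd p) = n \<and> x = cmp (fst p) (snd p))"
  using parts(5) by blast

lemma fact_ex:
  assumes "x \<in> M" "\<And>i. m i \<le> d x i" "\<And>i. k \<le> i \<Longrightarrow> m i = 0"
  shows "\<exists>p q. p \<in> M \<and> q \<in> M \<and> s p = r q \<and> d p = m \<and> x = cmp p q"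
proof -
  have "\<exists>!p. fst p \<in> M \<and> snd p \<in> M \<and> s (fst p) = r (snd p) \<and>
              d (fst p) = m \<and> d (snd p) = (\<lambda>i. d x i - m i) \<and> x = cmp (fst p) (snd p)"
    apply (rule fact)
    using assms d_van by (auto simp: fun_eq_iff)
  then obtain p where "fst p \<in> M \<and> snd p \<in> M \<and> s (fst p) = r (snd p) \<and>
              d (fst p) = m \<and> x = cmp (fst p) (snd p)" by blast
  then show ?thesis by blast
qed

lemma canc:
  assumes "a \<in> M" "a' \<in> M" "g \<in> M" "g' \<in> M" "s a = r g" "s a' = r g'"
    "cmp a g = cmp a' g'" "d a = d a'"
  shows "a = a' \<and> g = g'"
proof -
  have dg: "d g = d g'"
  proof
    fix i
    have "d (cmp a g) i = d (cmp a' g') i" using assms by simp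
    then show "d g i = d g' i" using assms d_cmp by (metis add_left_cancel)
  qed
  have dd: "d (cmp a g) = (\<lambda>i. d a i + d g i)" using assms(1,3,5) by (simp add: fun_eq_iff d_cmp)
  have "\<exists>!p. fst p \<in> M \<and> snd p \<in> M \<and> s (fst p) = r (snd p) \<and>
              d (fst p) = d a \<and> d (snd p) = d g \<and> cmp a g = cmp (fst p) (snd p)"
    apply (rule fact)
    using assms d_van dd cmp_M by auto
  then have "(a, g) = (a', g')" using assms dg
    by (metis fst_conv snd_conv)
  then show ?thesis by simp
qed

lemma lcanc:
  assumes "l \<in> M" "a \<in> M" "a' \<in> M" "s l = r a" "s l = r a'" "cmp l a = cmp l a'"
  shows "a = a'"
  using canc[of l l a a'] assms by auto

lemma common_ext:
  assumes "l \<in> M" "l' \<in> M" "g \<in> M" "g' \<in> M" "s l = r g" "s l' = r g'"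
    "cmp l g = cmp l' g'"
  shows "Lmin M r s cmp d l l' \<noteq> {}"
proof -
  define z where "z = cmp l g"
  have zM: "z \<in> M" using cmp_M[OF assms(1,3,5)] z_def by simp
  define m where "m = sup (d l) (d l')"
  have mi: "m i = max (d l i) (d l' i)" for i unfolding m_def by (simp add: sup_nat_def)
  have dz1: "d z i = d l i + d g i" for i
    unfolding z_def using d_cmp[OF assms(1,3,5)] .
  have z2: "z = cmp l' g'" using assms(7) z_def by simp
  have dz2: "d z i = d l' i + d g' i" for i
    unfolding z2 using d_cmp[OF assms(2,4,6)] .
  have le: "m i \<le> d z i" for i
    unfolding mi using dz1[of i] dz2[of i] by linarith
  have van: "k \<le> i \<Longrightarrow> m i = 0" for i unfolding mi using d_van assms(1,2) by simp
  obtain p q where pq: "p \<in> M" "q \<in> M" "s p = r q" "d p = m" "z = cmp p q"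
    using fact_ex[OF zM le van] by blast
  have ex: "\<exists>a. a \<in> M \<and> s l0 = r a \<and> p = cmp l0 a"
    if th: "l0 \<in> M" "g0 \<in> M" "s l0 = r g0" "z = cmp l0 g0" "\<And>i. d l0 i \<le> m i" for l0 g0
  proof -
    have le0: "d l0 i \<le> d p i" for i using th(5)[of i] pq(4) by simp
    have van0: "k \<le> i \<Longrightarrow> d l0 i = 0" for i using d_van th(1) by simp
    obtain p1 p2 where pp: "p1 \<in> M" "p2 \<in> M" "s p1 = r p2" "d p1 = d l0" "p = cmp p1 p2"
      using fact_ex[OF pq(1) le0 van0] by blast
    have rp: "r p = r p1" using r_cmp[OF pp(1,2,3)] pp(5) by simp
    have sp: "s p = s p2" using s_cmp[OF pp(1,2,3)] pp(5) by simp
    have "z = cmp (cmp p1 p2) q" using pq(5) pp(5) by simp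
    also have "\<dots> = cmp p1 (cmp p2 q)" using assoc[OF pp(1,2) pq(2) pp(3)] pq(3) sp by simp
    finally have z3: "z = cmp p1 (cmp p2 q)" .
    have c2: "cmp p2 q \<in> M" using cmp_M[OF pp(2) pq(2)] pq(3) sp by simp
    have r2: "r (cmp p2 q) = r p2" using r_cmp[OF pp(2) pq(2)] pq(3) sp by simp
    have "p1 = l0" using canc[OF pp(1) th(1) c2 th(2)] pp(3,4) r2 th(3) z3 th(4) by simp
    then show ?thesis using pp by blast
  qed
  obtain a where a: "a \<in> M" "s l = r a" "p = cmp l a"
    using ex[OF assms(1,3,5) z_def] mi by fastforce
  obtain b where b: "b \<in> M" "s l' = r b" "p = cmp l' b"
    using ex[OF assms(2,4,6) z2] mi by fastforce
  have "(a, b) \<in> Lmin M r s cmp d l l'"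
    unfolding Lmin_def using a b pq(4) m_def by auto
  then show ?thesis by blast
qed

lemma Lmin_mem:
  assumes "u \<in> M" "x \<in> M"
  shows "(a, b) \<in> Lmin M r s cmp d u x \<longleftrightarrow> a \<in> M \<and> b \<in> M \<and> s u = r a \<and> s x = r b \<and>
     cmp u a = cmp x b \<and> (\<forall>i. d u i + d a i = max (d u i) (d x i))"
proof -
  have "a \<in> M \<Longrightarrow> s u = r a \<Longrightarrow> d (cmp u a) = sup (d u) (d x) \<longleftrightarrow> (\<forall>i. d u i + d a i = max (d u i) (d x i))"
    using d_cmp assms by (auto simp: fun_eq_iff sup_fun_def sup_nat_def)
  then show ?thesis unfolding Lmin_def by auto
qed

lemma Lmin_facts:
  assumes "u \<in> M" "x \<in> M" "(a, b) \<in> Lmin M r s cmp d u x"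
  shows "a \<in> M" "b \<in> M" "s u = r a" "s x = r b" "cmp u a = cmp x b"
    "\<And>i. d u i + d a i = max (d u i) (d x i)"
    "\<And>i. d x i + d b i = max (d u i) (d x i)" "s a = s b"
proof -
  show a: "a \<in> M" "b \<in> M" "s u = r a" "s x = r b" "cmp u a = cmp x b"
    "\<And>i. d u i + d a i = max (d u i) (d x i)" using assms Lmin_mem by auto
  show "\<And>i. d x i + d b i = max (d u i) (d x i)"
    using a d_cmp assms by metis
  show "s a = s b" using a s_cmp assms by metis
qed

lemma Lmin_uniqA:
  assumes "u \<in> M" "x \<in> M" "(a, b) \<in> Lmin M r s cmp d u x" "(a', b') \<in> Lmin M r s cmp d u x"
    "al \<in> M" "be \<in> M" "s a = r al" "s a' = r be" "cmp a al = cmp a' be"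
  shows "a = a' \<and> b = b'"
proof -
  note A = Lmin_facts[OF assms(1,2,3)] and B = Lmin_facts[OF assms(1,2,4)]
  have "d a = d a'"
  proof
    fix i show "d a i = d a' i" using A(6)[of i] B(6)[of i] by simp
  qed
  then have "a = a'" using canc assms A B by blast
  then have "cmp x b = cmp x b'" using A B by simp
  then show ?thesis using lcanc A B assms \<open>a = a'\<close> by metis
qed

lemma Lmin_uniqB:
  assumes "u \<in> M" "x \<in> M" "(a, b) \<in> Lmin M r s cmp d u x" "(a', b') \<in> Lmin M r s cmp d u x"
    "al \<in> M" "be \<in> M" "s b = r al" "s b' = r be" "cmp b al = cmp b' be"
  shows "a = a' \<and> b = b'"
proof -
  note A = Lmin_facts[OF assms(1,2,3)] and B = Lmin_facts[OF assms(1,2,4)]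
  have "d b = d b'"
  proof
    fix i show "d b i = d b' i" using A(7)[of i] B(7)[of i] by simp
  qed
  then have "b = b'" using canc assms A B by blast
  then have "cmp u a = cmp u a'" using A B by simp
  then show ?thesis using lcanc A B assms \<open>b = b'\<close> by metis
qed

lemma Lmin_assoc:
  assumes "u \<in> M" "x \<in> M" "(a, b) \<in> Lmin M r s cmp d u x" "al \<in> M" "s a = r al"
  shows "cmp u (cmp a al) = cmp x (cmp b al)"
proof -
  note A = Lmin_facts[OF assms(1,2,3)]
  have "cmp u (cmp a al) = cmp (cmp u a) al" using assoc[of u a al] A assms by simp
  also have "\<dots> = cmp (cmp x b) al" using A by simp
  also have "\<dots> = cmp x (cmp b al)" using assoc[of x b al] A assms by simp
  finally show ?thesis .
qed

abbreviation "SL \<equiv> S_Lambda M r s cmp d"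

lemma SL_mem:
  assumes "F \<in> SL" "(l, u) \<in> F"
  shows "l \<in> M" "u \<in> M" "s l = s u"
  using assms unfolding S_Lambda_def s_pairs_def by auto

lemma SL_eq1:
  assumes "F \<in> SL" "(l, u) \<in> F" "(l', u') \<in> F" "Lmin M r s cmp d l l' \<noteq> {}"
  shows "(l, u) = (l', u')"
  using assms unfolding S_Lambda_def by fast

lemma SL_eq2:
  assumes "F \<in> SL" "(l, u) \<in> F" "(l', u') \<in> F" "Lmin M r s cmp d u u' \<noteq> {}"
  shows "(l, u) = (l', u')"
  using assms unfolding S_Lambda_def by fast

lemma mult_mem:
  "z \<in> S_mult M r s cmp d F G \<longleftrightarrow> (\<exists>l u x e a b. (l, u) \<in> F \<and> (x, e) \<in> G \<and>
     (a, b) \<in> Lmin M r s cmp d u x \<and> z = (cmp l a, cmp e b))"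
  unfolding S_mult_def by blast



lemma disj1:
  assumes F: "F \<in> SL" and G: "G \<in> SL"
    and lu: "(l, u) \<in> F" and xe: "(x, e) \<in> G" and ab: "(a, b) \<in> Lmin M r s cmp d u x"
    and lu': "(l', u') \<in> F" and xe': "(x', e') \<in> G" and ab': "(a', b') \<in> Lmin M r s cmp d u' x'"
    and Qm: "(al, be) \<in> Lmin M r s cmp d (cmp l a) (cmp l' a')"
  shows "l = l' \<and> u = u' \<and> x = x' \<and> e = e' \<and> a = a' \<and> b = b'"
proof -
  note L = SL_mem[OF F lu] and X = SL_mem[OF G xe]
  note A = Lmin_facts[OF L(2) X(1) ab]
  note L' = SL_mem[OF F lu'] and X' = SL_mem[OF G xe']
  note A' = Lmin_facts[OF L'(2) X'(1) ab']
  have sla: "s l = r a" using L(3) A(3) by simp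
  have sla': "s l' = r a'" using L'(3) A'(3) by simp
  note laM = cmp_M[OF L(1) A(1) sla] and laM' = cmp_M[OF L'(1) A'(1) sla']
  note Q = Lmin_facts[OF laM laM' Qm]
  have sal: "s a = r al" using Q(3) s_cmp[OF L(1) A(1) sla] by simp
  have sal': "s a' = r be" using Q(4) s_cmp[OF L'(1) A'(1) sla'] by simp
  note aaM = cmp_M[OF A(1) Q(1) sal] and aaM' = cmp_M[OF A'(1) Q(2) sal']
  have raa: "s l = r (cmp a al)" using r_cmp[OF A(1) Q(1) sal] sla by simp
  have raa': "s l' = r (cmp a' be)" using r_cmp[OF A'(1) Q(2) sal'] sla' by simp
  have e1: "cmp l (cmp a al) = cmp l' (cmp a' be)"
    using Q(5) assoc[OF L(1) A(1) Q(1) sla sal] assoc[OF L'(1) A'(1) Q(2) sla' sal'] by simp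
  have "Lmin M r s cmp d l l' \<noteq> {}" by (rule common_ext[OF L(1) L'(1) aaM aaM' raa raa' e1])
  then have "(l, u) = (l', u')" by (rule SL_eq1[OF F lu lu'])
  then have eq: "l = l'" "u = u'" by auto
  have e2: "cmp a al = cmp a' be"
    by (rule lcanc[OF L(1) aaM aaM' raa]) (use raa' e1 eq in simp_all)
  have "cmp x (cmp b al) = cmp u (cmp a al)"
    using Lmin_assoc[OF L(2) X(1) ab Q(1) sal] by simp
  also have "\<dots> = cmp u' (cmp a' be)" using e2 eq by simp
  also have "\<dots> = cmp x' (cmp b' be)"
    using Lmin_assoc[OF L'(2) X'(1) ab' Q(2) sal'] by simp
  finally have e3: "cmp x (cmp b al) = cmp x' (cmp b' be)" .
  have sbl: "s b = r al" using A(8) sal by simp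
  have sbl': "s b' = r be" using A'(8) sal' by simp
  have rb: "s x = r (cmp b al)" using r_cmp[OF A(2) Q(1) sbl] A(4) by simp
  have rb': "s x' = r (cmp b' be)" using r_cmp[OF A'(2) Q(2) sbl'] A'(4) by simp
  have "Lmin M r s cmp d x x' \<noteq> {}"
    by (rule common_ext[OF X(1) X'(1) cmp_M[OF A(2) Q(1) sbl] cmp_M[OF A'(2) Q(2) sbl'] rb rb' e3])
  then have "(x, e) = (x', e')" by (rule SL_eq1[OF G xe xe'])
  then have eq2: "x = x'" "e = e'" by auto
  have ab'': "(a', b') \<in> Lmin M r s cmp d u x" using ab' eq eq2 by simp
  have "a = a' \<and> b = b'" by (rule Lmin_uniqA[OF L(2) X(1) ab ab'' Q(1) Q(2) sal sal' e2])
  then show ?thesis using eq eq2 by simp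
qed

lemma disj2:
  assumes F: "F \<in> SL" and G: "G \<in> SL"
    and lu: "(l, u) \<in> F" and xe: "(x, e) \<in> G" and ab: "(a, b) \<in> Lmin M r s cmp d u x"
    and lu': "(l', u') \<in> F" and xe': "(x', e') \<in> G" and ab': "(a', b') \<in> Lmin M r s cmp d u' x'"
    and Qm: "(al, be) \<in> Lmin M r s cmp d (cmp e b) (cmp e' b')"
  shows "l = l' \<and> u = u' \<and> x = x' \<and> e = e' \<and> a = a' \<and> b = b'"
proof -
  note L = SL_mem[OF F lu] and X = SL_mem[OF G xe]
  note A = Lmin_facts[OF L(2) X(1) ab]
  note L' = SL_mem[OF F lu'] and X' = SL_mem[OF G xe']
  note A' = Lmin_facts[OF L'(2) X'(1) ab']
  have seb: "s e = r b" using X(3) A(4) by simp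
  have seb': "s e' = r b'" using X'(3) A'(4) by simp
  note ebM = cmp_M[OF X(2) A(2) seb] and ebM' = cmp_M[OF X'(2) A'(2) seb']
  note Q = Lmin_facts[OF ebM ebM' Qm]
  have sbl: "s b = r al" using Q(3) s_cmp[OF X(2) A(2) seb] by simp
  have sbl': "s b' = r be" using Q(4) s_cmp[OF X'(2) A'(2) seb'] by simp
  note bbM = cmp_M[OF A(2) Q(1) sbl] and bbM' = cmp_M[OF A'(2) Q(2) sbl']
  have rbb: "s e = r (cmp b al)" using r_cmp[OF A(2) Q(1) sbl] seb by simp
  have rbb': "s e' = r (cmp b' be)" using r_cmp[OF A'(2) Q(2) sbl'] seb' by simp
  have e1: "cmp e (cmp b al) = cmp e' (cmp b' be)"
    using Q(5) assoc[OF X(2) A(2) Q(1) seb sbl] assoc[OF X'(2) A'(2) Q(2) seb' sbl'] by simp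
  have "Lmin M r s cmp d e e' \<noteq> {}" by (rule common_ext[OF X(2) X'(2) bbM bbM' rbb rbb' e1])
  then have "(x, e) = (x', e')" by (rule SL_eq2[OF G xe xe'])
  then have eq2: "x = x'" "e = e'" by auto
  have e2: "cmp b al = cmp b' be"
    by (rule lcanc[OF X(2) bbM bbM' rbb]) (use rbb' e1 eq2 in simp_all)
  have sal: "s a = r al" using A(8) sbl by simp
  have sal': "s a' = r be" using A'(8) sbl' by simp
  have "cmp u (cmp a al) = cmp x (cmp b al)"
    using Lmin_assoc[OF L(2) X(1) ab Q(1) sal] by simp
  also have "\<dots> = cmp x' (cmp b' be)" using e2 eq2 by simp
  also have "\<dots> = cmp u' (cmp a' be)"
    using Lmin_assoc[OF L'(2) X'(1) ab' Q(2) sal'] by simp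
  finally have e3: "cmp u (cmp a al) = cmp u' (cmp a' be)" .
  have ra: "s u = r (cmp a al)" using r_cmp[OF A(1) Q(1) sal] A(3) by simp
  have ra': "s u' = r (cmp a' be)" using r_cmp[OF A'(1) Q(2) sal'] A'(3) by simp
  have "Lmin M r s cmp d u u' \<noteq> {}"
    by (rule common_ext[OF L(2) L'(2) cmp_M[OF A(1) Q(1) sal] cmp_M[OF A'(1) Q(2) sal'] ra ra' e3])
  then have "(l, u) = (l', u')" by (rule SL_eq2[OF F lu lu'])
  then have eq: "l = l'" "u = u'" by auto
  have ab'': "(a', b') \<in> Lmin M r s cmp d u x" using ab' eq eq2 by simp
  have "a = a' \<and> b = b'" by (rule Lmin_uniqB[OF L(2) X(1) ab ab'' Q(1) Q(2) sbl sbl' e2])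
  then show ?thesis using eq eq2 by simp
qed

lemma closed:
  assumes FA: "finitely_aligned M r s cmp d" and F: "F \<in> SL" and G: "G \<in> SL"
  shows "S_mult M r s cmp d F G \<in> SL"
proof -
  let ?FG = "S_mult M r s cmp d F G"
  let ?f = "\<lambda>(p, q, a, b). (cmp (fst p) a, cmp (snd q) b)"
  let ?S = "SIGMA p:F. SIGMA q:G. Lmin M r s cmp d (snd p) (fst q)"
  have "?FG \<subseteq> ?f ` ?S"
  proof
    fix z assume "z \<in> ?FG"
    then obtain l u x e a b where "(l, u) \<in> F" "(x, e) \<in> G"
      "(a, b) \<in> Lmin M r s cmp d u x" "z = (cmp l a, cmp e b)" unfolding mult_mem by blast
    then show "z \<in> ?f ` ?S"
      by (intro image_eqI[of _ _ "((l, u), (x, e), (a, b))"]) auto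
  qed
  moreover have "finite ?S"
  proof (intro finite_SigmaI)
    show "finite F" "finite G" using F G unfolding S_Lambda_def by auto
    fix p q assume pq: "p \<in> F" "q \<in> G"
    have "snd p \<in> M" using SL_mem(2)[OF F, of "fst p" "snd p"] pq by simp
    moreover have "fst q \<in> M" using SL_mem(1)[OF G, of "fst q" "snd q"] pq by simp
    ultimately show "finite (Lmin M r s cmp d (snd p) (fst q))"
      using FA unfolding finitely_aligned_def by blast
  qed
  ultimately have fin: "finite ?FG" by (meson finite_imageI finite_subset)
  have sub: "?FG \<subseteq> s_pairs M s"
  proof
    fix z assume "z \<in> ?FG"
    then obtain l u x e a b where lu: "(l, u) \<in> F" and xe: "(x, e) \<in> G" and
      ab: "(a, b) \<in> Lmin M r s cmp d u x" and z: "z = (cmp l a, cmp e b)" unfolding mult_mem by blast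
    note L = SL_mem[OF F lu] and X = SL_mem[OF G xe]
    note A = Lmin_facts[OF L(2) X(1) ab]
    have sla: "s l = r a" using L(3) A(3) by simp
    have seb: "s e = r b" using X(3) A(4) by simp
    have "cmp l a \<in> M" "cmp e b \<in> M" "s (cmp l a) = s (cmp e b)"
      using cmp_M[OF L(1) A(1) sla] cmp_M[OF X(2) A(2) seb]
        s_cmp[OF L(1) A(1) sla] s_cmp[OF X(2) A(2) seb] A(8) by simp_all
    then show "z \<in> s_pairs M s" unfolding s_pairs_def z by simp
  qed
  have disj: "Lmin M r s cmp d (fst P) (fst P') = {} \<and> Lmin M r s cmp d (snd P) (snd P') = {}"
    if P: "P \<in> ?FG" and P': "P' \<in> ?FG" and ne: "P \<noteq> P'" for P P'
  proof -
    obtain l u x e a b where lu: "(l, u) \<in> F" and xe: "(x, e) \<in> G" and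
      ab: "(a, b) \<in> Lmin M r s cmp d u x" and z: "P = (cmp l a, cmp e b)"
      using P unfolding mult_mem by blast
    obtain l' u' x' e' a' b' where lu': "(l', u') \<in> F" and xe': "(x', e') \<in> G" and
      ab': "(a', b') \<in> Lmin M r s cmp d u' x'" and z': "P' = (cmp l' a', cmp e' b')"
      using P' unfolding mult_mem by blast
    have 1: "Lmin M r s cmp d (cmp l a) (cmp l' a') = {}"
    proof (rule ccontr)
      assume "Lmin M r s cmp d (cmp l a) (cmp l' a') \<noteq> {}"
      then obtain al be where "(al, be) \<in> Lmin M r s cmp d (cmp l a) (cmp l' a')" by auto
      from disj1[OF F G lu xe ab lu' xe' ab' this] have "P = P'" using z z' by simp
      then show False using ne by simp
    qed
    have 2: "Lmin M r s cmp d (cmp e b) (cmp e' b') = {}"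
    proof (rule ccontr)
      assume "Lmin M r s cmp d (cmp e b) (cmp e' b') \<noteq> {}"
      then obtain al be where "(al, be) \<in> Lmin M r s cmp d (cmp e b) (cmp e' b')" by auto
      from disj2[OF F G lu xe ab lu' xe' ab' this] have "P = P'" using z z' by simp
      then show False using ne by simp
    qed
    show ?thesis using 1 2 z z' by simp
  qed
  have X: "\<forall>(l, u)\<in>?FG. \<forall>(n, w)\<in>?FG. (l, u) \<noteq> (n, w) \<longrightarrow>
        Lmin M r s cmp d l n = {} \<and> Lmin M r s cmp d u w = {}"
    unfolding case_prod_beta prod.collapse using disj by blast
  show ?thesis unfolding S_Lambda_def mem_Collect_eq by (rule conjI[OF fin conjI[OF sub X]])
qed


definition T where "T u x e y = {(A, Gm). \<exists>be. A \<in> M \<and> Gm \<in> M \<and> be \<in> M \<and>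
   s u = r A \<and> s x = r be \<and> s e = r be \<and> s y = r Gm \<and>
   cmp u A = cmp x be \<and> cmp e be = cmp y Gm \<and>
   (\<forall>i. d be i = max (d u i - d x i) (d y i - d e i))}"

lemma T1:
  assumes M: "u \<in> M" "x \<in> M" "e \<in> M" "y \<in> M" "s x = s e"
    and ab: "(a, b) \<in> Lmin M r s cmp d u x" and cg: "(c, g) \<in> Lmin M r s cmp d (cmp e b) y"
  shows "(cmp a c, g) \<in> T u x e y"
proof -
  note A = Lmin_facts[OF M(1,2) ab]
  have eb: "cmp e b \<in> M" "s (cmp e b) = s b" "r (cmp e b) = r e" "\<And>i. d (cmp e b) i = d e i + d b i"
    using A M cmp_M s_cmp r_cmp d_cmp by auto
  note C = Lmin_facts[OF eb(1) M(4) cg]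
  have ac: "cmp a c \<in> M" "r (cmp a c) = r a" "\<And>i. d (cmp a c) i = d a i + d c i"
    using A C eb cmp_M r_cmp d_cmp by auto
  have bc: "cmp b c \<in> M" "r (cmp b c) = r b" "\<And>i. d (cmp b c) i = d b i + d c i"
    using A C eb cmp_M r_cmp d_cmp by auto
  have e1: "cmp u (cmp a c) = cmp x (cmp b c)"
    using assoc[of u a c] assoc[of x b c] A C eb M by auto
  have e2: "cmp e (cmp b c) = cmp y g"
    using assoc[of e b c] A C eb M by auto
  have dg: "d (cmp b c) i = max (d u i - d x i) (d y i - d e i)" for i
    using A(7)[of i] C(6)[of i] eb(4)[of i] bc(3)[of i] by arith
  show ?thesis unfolding T_def using ac bc e1 e2 dg A C M eb
    by (intro CollectI case_prodI exI[of _ "cmp b c"]) auto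
qed

lemma T3:
  assumes M: "u \<in> M" "x \<in> M" "e \<in> M" "y \<in> M" "s x = s e"
    and bc: "(b, c) \<in> Lmin M r s cmp d e y" and ag: "(a, g) \<in> Lmin M r s cmp d u (cmp x b)"
  shows "(a, cmp c g) \<in> T u x e y"
proof -
  note B = Lmin_facts[OF M(3,4) bc]
  have xb: "cmp x b \<in> M" "s (cmp x b) = s b" "r (cmp x b) = r x" "\<And>i. d (cmp x b) i = d x i + d b i"
    using B M cmp_M s_cmp r_cmp d_cmp by auto
  note A = Lmin_facts[OF M(1) xb(1) ag]
  have cg: "cmp c g \<in> M" "r (cmp c g) = r c" "\<And>i. d (cmp c g) i = d c i + d g i"
    using A B xb cmp_M r_cmp d_cmp by auto
  have bg: "cmp b g \<in> M" "r (cmp b g) = r b" "\<And>i. d (cmp b g) i = d b i + d g i"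
    using A B xb cmp_M r_cmp d_cmp by auto
  have e1: "cmp u a = cmp x (cmp b g)"
    using assoc[of x b g] A B xb M by auto
  have e2: "cmp e (cmp b g) = cmp y (cmp c g)"
    using assoc[of e b g] assoc[of y c g] A B xb M by auto
  have dg: "d (cmp b g) i = max (d u i - d x i) (d y i - d e i)" for i
    using A(7)[of i] B(6)[of i] xb(4)[of i] bg(3)[of i] by arith
  show ?thesis unfolding T_def using cg bg e1 e2 dg A B M xb
    by (intro CollectI case_prodI exI[of _ "cmp b g"]) auto
qed

lemma T2:
  assumes M: "u \<in> M" "x \<in> M" "e \<in> M" "y \<in> M" "s x = s e"
    and T: "(A, Gm) \<in> T u x e y"
  shows "\<exists>a b c. (a, b) \<in> Lmin M r s cmp d u x \<and> (c, Gm) \<in> Lmin M r s cmp d (cmp e b) y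
     \<and> A = cmp a c"
proof -
  obtain be where H: "A \<in> M" "Gm \<in> M" "be \<in> M" "s u = r A" "s x = r be" "s e = r be" "s y = r Gm"
    "cmp u A = cmp x be" "cmp e be = cmp y Gm" "\<And>i. d be i = max (d u i - d x i) (d y i - d e i)"
    using T unfolding T_def by auto
  obtain b c where bc: "b \<in> M" "c \<in> M" "s b = r c" "d b = (\<lambda>i. d u i - d x i)" "be = cmp b c"
  proof -
    have le: "d u i - d x i \<le> d be i" for i using H(10)[of i] by simp
    have van: "k \<le> i \<Longrightarrow> d u i - d x i = 0" for i using d_van M(1) by simp
    show ?thesis using fact_ex[of be "\<lambda>i. d u i - d x i", OF H(3) le van] that by blast
  qed
  have rb: "r b = r be" using bc r_cmp by auto
  have dA: "d u i + d A i = d x i + d be i" for i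
  proof -
    have "d (cmp u A) i = d (cmp x be) i" using H(8) by simp
    then show ?thesis using d_cmp[of u A i] d_cmp[of x be i] H(1,3,4,5) M(1,2) by simp
  qed
  have le: "d x i - d u i \<le> d A i" for i using dA[of i] H(10)[of i] by arith
  have van: "k \<le> i \<Longrightarrow> d x i - d u i = 0" for i using d_van M(2) by simp
  obtain a c' where ac: "a \<in> M" "c' \<in> M" "s a = r c'" "d a = (\<lambda>i. d x i - d u i)" "A = cmp a c'"
    using fact_ex[of A "\<lambda>i. d x i - d u i", OF H(1) le van] by blast
  have ra: "r a = r A" using ac r_cmp by auto
  have ua: "cmp u a \<in> M" "s (cmp u a) = s a" "\<And>i. d (cmp u a) i = d u i + d a i"
    using ac H ra M cmp_M s_cmp d_cmp by auto
  have xb: "cmp x b \<in> M" "s (cmp x b) = s b" "\<And>i. d (cmp x b) i = d x i + d b i"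
    using bc H rb M cmp_M s_cmp d_cmp by auto
  have "cmp (cmp u a) c' = cmp (cmp x b) c"
    using assoc[of u a c'] assoc[of x b c] ac bc H ra rb M by auto
  moreover have "d (cmp u a) = d (cmp x b)"
    using ua(3) xb(3) ac(4) bc(4) by (auto simp: fun_eq_iff)
  ultimately have eq: "cmp u a = cmp x b" "c' = c" using canc[of "cmp u a" "cmp x b" c' c] ua xb ac bc
    by auto
  have ab: "(a, b) \<in> Lmin M r s cmp d u x"
    using Lmin_mem M ac bc eq ra rb H ua xb by auto
  have eb: "cmp e b \<in> M" "s (cmp e b) = s b" "\<And>i. d (cmp e b) i = d e i + d b i"
    using bc H rb M cmp_M s_cmp d_cmp by auto
  have "cmp (cmp e b) c = cmp y Gm" using assoc[of e b c] bc H rb M by auto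
  moreover have "d (cmp e b) i + d c i = max (d (cmp e b) i) (d y i)" for i
  proof -
    have "d be i = d b i + d c i" using bc d_cmp by auto
    then show ?thesis using eb(3)[of i] H(10)[of i] bc(4) by auto
  qed
  ultimately have "(c, Gm) \<in> Lmin M r s cmp d (cmp e b) y"
    using Lmin_mem[OF eb(1) M(4)] eb bc H by auto
  then show ?thesis using ab ac eq by auto
qed

lemma T4:
  assumes M: "u \<in> M" "x \<in> M" "e \<in> M" "y \<in> M" "s x = s e"
    and T: "(A, Gm) \<in> T u x e y"
  shows "\<exists>b c g. (b, c) \<in> Lmin M r s cmp d e y \<and> (A, g) \<in> Lmin M r s cmp d u (cmp x b)
     \<and> Gm = cmp c g"
proof -
  obtain be where H: "A \<in> M" "Gm \<in> M" "be \<in> M" "s u = r A" "s x = r be" "s e = r be" "s y = r Gm"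
    "cmp u A = cmp x be" "cmp e be = cmp y Gm" "\<And>i. d be i = max (d u i - d x i) (d y i - d e i)"
    using T unfolding T_def by auto
  obtain b g where bg: "b \<in> M" "g \<in> M" "s b = r g" "d b = (\<lambda>i. d y i - d e i)" "be = cmp b g"
  proof -
    have le: "d y i - d e i \<le> d be i" for i using H(10)[of i] by simp
    have van: "k \<le> i \<Longrightarrow> d y i - d e i = 0" for i using d_van M(4) by simp
    show ?thesis using fact_ex[of be "\<lambda>i. d y i - d e i", OF H(3) le van] that by blast
  qed
  have rb: "r b = r be" using bg r_cmp by auto
  have dG: "d y i + d Gm i = d e i + d be i" for i
  proof -
    have "d (cmp y Gm) i = d (cmp e be) i" using H(9) by simp
    then show ?thesis using d_cmp[of y Gm i] d_cmp[of e be i] H(2,3,6,7) M(3,4) by simp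
  qed
  have le: "d e i - d y i \<le> d Gm i" for i using dG[of i] H(10)[of i] by arith
  have van: "k \<le> i \<Longrightarrow> d e i - d y i = 0" for i using d_van M(3) by simp
  obtain c g' where cg: "c \<in> M" "g' \<in> M" "s c = r g'" "d c = (\<lambda>i. d e i - d y i)" "Gm = cmp c g'"
    using fact_ex[of Gm "\<lambda>i. d e i - d y i", OF H(2) le van] by blast
  have rc: "r c = r Gm" using cg r_cmp by auto
  have yc: "cmp y c \<in> M" "s (cmp y c) = s c" "\<And>i. d (cmp y c) i = d y i + d c i"
    using cg H rc M cmp_M s_cmp d_cmp by auto
  have eb: "cmp e b \<in> M" "s (cmp e b) = s b" "\<And>i. d (cmp e b) i = d e i + d b i"
    using bg H rb M cmp_M s_cmp d_cmp by auto
  have "cmp (cmp e b) g = cmp (cmp y c) g'"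
    using assoc[of y c g'] assoc[of e b g] bg cg H rc rb M by auto
  moreover have "d (cmp e b) = d (cmp y c)"
    using yc(3) eb(3) cg(4) bg(4) by (auto simp: fun_eq_iff)
  ultimately have eq: "cmp e b = cmp y c" "g = g'" using canc[of "cmp e b" "cmp y c" g g'] yc eb cg bg
    by auto
  have bc: "(b, c) \<in> Lmin M r s cmp d e y"
    using Lmin_mem M bg cg eq rc rb H yc eb by auto
  have xb: "cmp x b \<in> M" "s (cmp x b) = s b" "\<And>i. d (cmp x b) i = d x i + d b i"
    using bg H rb M cmp_M s_cmp d_cmp by auto
  have "cmp u A = cmp (cmp x b) g" using assoc[of x b g] bg H rb M by auto
  moreover have "d u i + d A i = max (d u i) (d (cmp x b) i)" for i
  proof -
    have "d (cmp u A) i = d (cmp x be) i" using H(8) by simp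
    then have "d u i + d A i = d x i + d be i"
      using d_cmp[of u A i] d_cmp[of x be i] H(1,3,4,5) M(1,2) by simp
    moreover have "d be i = d b i + d g i" using bg d_cmp by auto
    moreover have "d b i = d y i - d e i" using bg(4) by simp
    ultimately show ?thesis using xb(3)[of i] H(10)[of i] by arith
  qed
  ultimately have "(A, g) \<in> Lmin M r s cmp d u (cmp x b)"
    using Lmin_mem[OF M(1) xb(1)] xb bg H by auto
  then show ?thesis using bc cg eq by auto
qed



lemma LHS_mem:
  assumes F: "F \<in> SL" and G: "G \<in> SL" and H: "H \<in> SL"
  shows "z \<in> S_mult M r s cmp d (S_mult M r s cmp d F G) H \<longleftrightarrow>
    (\<exists>l u x e y f A Gm. (l, u) \<in> F \<and> (x, e) \<in> G \<and> (y, f) \<in> H \<and> (A, Gm) \<in> T u x e y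
      \<and> z = (cmp l A, cmp f Gm))"
proof
  assume "z \<in> S_mult M r s cmp d (S_mult M r s cmp d F G) H"
  then obtain L E y f c g where LE: "(L, E) \<in> S_mult M r s cmp d F G" and yf: "(y, f) \<in> H"
    and cg: "(c, g) \<in> Lmin M r s cmp d E y" and z: "z = (cmp L c, cmp f g)"
    unfolding mult_mem[of z] by blast
  obtain l u x e a b where lu: "(l, u) \<in> F" and xe: "(x, e) \<in> G" and
      ab: "(a, b) \<in> Lmin M r s cmp d u x" and LE': "L = cmp l a" "E = cmp e b"
    using LE unfolding mult_mem by blast
  note L = SL_mem[OF F lu] and X = SL_mem[OF G xe] and Y = SL_mem[OF H yf]
  note A = Lmin_facts[OF L(2) X(1) ab]
  have seb: "s e = r b" using X(3) A(4) by simp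
  have sla: "s l = r a" using L(3) A(3) by simp
  note ebM = cmp_M[OF X(2) A(2) seb]
  have cg': "(c, g) \<in> Lmin M r s cmp d (cmp e b) y" using cg LE'(2) by simp
  note C = Lmin_facts[OF ebM Y(1) cg']
  have sac: "s a = r c" using C(3) s_cmp[OF X(2) A(2) seb] A(8) by simp
  have "(cmp a c, g) \<in> T u x e y"
    by (rule T1[OF L(2) X(1) X(2) Y(1) X(3) ab cg'])
  moreover have "cmp L c = cmp l (cmp a c)" using LE'(1) assoc[OF L(1) A(1) C(1) sla sac] by simp
  ultimately show "\<exists>l u x e y f A Gm. (l, u) \<in> F \<and> (x, e) \<in> G \<and> (y, f) \<in> H \<and> (A, Gm) \<in> T u x e y
      \<and> z = (cmp l A, cmp f Gm)" using lu xe yf z by blast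
next
  assume "\<exists>l u x e y f A Gm. (l, u) \<in> F \<and> (x, e) \<in> G \<and> (y, f) \<in> H \<and> (A, Gm) \<in> T u x e y
      \<and> z = (cmp l A, cmp f Gm)"
  then obtain l u x e y f A Gm where lu: "(l, u) \<in> F" and xe: "(x, e) \<in> G" and yf: "(y, f) \<in> H"
    and T: "(A, Gm) \<in> T u x e y" and z: "z = (cmp l A, cmp f Gm)" by blast
  note L = SL_mem[OF F lu] and X = SL_mem[OF G xe] and Y = SL_mem[OF H yf]
  obtain a b c where ab: "(a, b) \<in> Lmin M r s cmp d u x" and
    cg: "(c, Gm) \<in> Lmin M r s cmp d (cmp e b) y" and A: "A = cmp a c"
    using T2[OF L(2) X(1) X(2) Y(1) X(3) T] by blast
  note AB = Lmin_facts[OF L(2) X(1) ab]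
  have seb: "s e = r b" using X(3) AB(4) by simp
  have sla: "s l = r a" using L(3) AB(3) by simp
  note ebM = cmp_M[OF X(2) AB(2) seb]
  note C = Lmin_facts[OF ebM Y(1) cg]
  have sac: "s a = r c" using C(3) s_cmp[OF X(2) AB(2) seb] AB(8) by simp
  have "(cmp l a, cmp e b) \<in> S_mult M r s cmp d F G" unfolding mult_mem using lu xe ab by blast
  moreover have "cmp l A = cmp (cmp l a) c" using A assoc[OF L(1) AB(1) C(1) sla sac] by simp
  ultimately show "z \<in> S_mult M r s cmp d (S_mult M r s cmp d F G) H"
    unfolding mult_mem using yf cg z by blast
qed

lemma RHS_mem:
  assumes F: "F \<in> SL" and G: "G \<in> SL" and H: "H \<in> SL"
  shows "z \<in> S_mult M r s cmp d F (S_mult M r s cmp d G H) \<longleftrightarrow>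
    (\<exists>l u x e y f A Gm. (l, u) \<in> F \<and> (x, e) \<in> G \<and> (y, f) \<in> H \<and> (A, Gm) \<in> T u x e y
      \<and> z = (cmp l A, cmp f Gm))"
proof
  assume "z \<in> S_mult M r s cmp d F (S_mult M r s cmp d G H)"
  then obtain l u X Fm a g where lu: "(l, u) \<in> F" and XF: "(X, Fm) \<in> S_mult M r s cmp d G H"
    and ag: "(a, g) \<in> Lmin M r s cmp d u X" and z: "z = (cmp l a, cmp Fm g)"
    unfolding mult_mem[of z] by blast
  obtain x e y f b c where xe: "(x, e) \<in> G" and yf: "(y, f) \<in> H" and
      bc: "(b, c) \<in> Lmin M r s cmp d e y" and XF': "X = cmp x b" "Fm = cmp f c"
    using XF unfolding mult_mem by blast
  note L = SL_mem[OF F lu] and Xm = SL_mem[OF G xe] and Y = SL_mem[OF H yf]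
  note B = Lmin_facts[OF Xm(2) Y(1) bc]
  have sxb: "s x = r b" using Xm(3) B(3) by simp
  have sfc: "s f = r c" using Y(3) B(4) by simp
  note xbM = cmp_M[OF Xm(1) B(1) sxb]
  have ag': "(a, g) \<in> Lmin M r s cmp d u (cmp x b)" using ag XF'(1) by simp
  note A = Lmin_facts[OF L(2) xbM ag']
  have scg: "s c = r g" using A(4) s_cmp[OF Xm(1) B(1) sxb] B(8) by simp
  have "(a, cmp c g) \<in> T u x e y"
    by (rule T3[OF L(2) Xm(1) Xm(2) Y(1) Xm(3) bc ag'])
  moreover have "cmp Fm g = cmp f (cmp c g)" using XF'(2) assoc[OF Y(2) B(2) A(2) sfc scg] by simp
  ultimately show "\<exists>l u x e y f A Gm. (l, u) \<in> F \<and> (x, e) \<in> G \<and> (y, f) \<in> H \<and> (A, Gm) \<in> T u x e y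
      \<and> z = (cmp l A, cmp f Gm)" using lu xe yf z by blast
next
  assume "\<exists>l u x e y f A Gm. (l, u) \<in> F \<and> (x, e) \<in> G \<and> (y, f) \<in> H \<and> (A, Gm) \<in> T u x e y
      \<and> z = (cmp l A, cmp f Gm)"
  then obtain l u x e y f A Gm where lu: "(l, u) \<in> F" and xe: "(x, e) \<in> G" and yf: "(y, f) \<in> H"
    and T: "(A, Gm) \<in> T u x e y" and z: "z = (cmp l A, cmp f Gm)" by blast
  note L = SL_mem[OF F lu] and Xm = SL_mem[OF G xe] and Y = SL_mem[OF H yf]
  obtain b c g where bc: "(b, c) \<in> Lmin M r s cmp d e y" and
    ag: "(A, g) \<in> Lmin M r s cmp d u (cmp x b)" and Gm: "Gm = cmp c g"
    using T4[OF L(2) Xm(1) Xm(2) Y(1) Xm(3) T] by blast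
  note B = Lmin_facts[OF Xm(2) Y(1) bc]
  have sxb: "s x = r b" using Xm(3) B(3) by simp
  have sfc: "s f = r c" using Y(3) B(4) by simp
  note xbM = cmp_M[OF Xm(1) B(1) sxb]
  note AG = Lmin_facts[OF L(2) xbM ag]
  have scg: "s c = r g" using AG(4) s_cmp[OF Xm(1) B(1) sxb] B(8) by simp
  have "(cmp x b, cmp f c) \<in> S_mult M r s cmp d G H" unfolding mult_mem using xe yf bc by blast
  moreover have "cmp f Gm = cmp (cmp f c) g" using Gm assoc[OF Y(2) B(2) AG(2) sfc scg] by simp
  ultimately show "z \<in> S_mult M r s cmp d F (S_mult M r s cmp d G H)"
    unfolding mult_mem using lu ag z by blast
qed

lemma assoc_mult:
  assumes "F \<in> SL" "G \<in> SL" "H \<in> SL"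
  shows "S_mult M r s cmp d (S_mult M r s cmp d F G) H = S_mult M r s cmp d F (S_mult M r s cmp d G H)"
proof (rule set_eqI)
  fix z show "z \<in> S_mult M r s cmp d (S_mult M r s cmp d F G) H \<longleftrightarrow>
     z \<in> S_mult M r s cmp d F (S_mult M r s cmp d G H)"
    unfolding LHS_mem[OF assms] RHS_mem[OF assms] ..
qed

end

theorem proposition4p3:
  fixes k :: nat and M :: "'a set" and r s :: "'a \<Rightarrow> 'a"
    and cmp :: "'a \<Rightarrow> 'a \<Rightarrow> 'a" and d :: "'a \<Rightarrow> nat \<Rightarrow> nat"
  assumes "k_graph k M r s cmp d"
    and "finitely_aligned M r s cmp d"
  shows "(\<forall>F\<in>S_Lambda M r s cmp d. \<forall>G\<in>S_Lambda M r s cmp d.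
            S_mult M r s cmp d F G \<in> S_Lambda M r s cmp d)
       \<and> (\<forall>F\<in>S_Lambda M r s cmp d. \<forall>G\<in>S_Lambda M r s cmp d. \<forall>H\<in>S_Lambda M r s cmp d.
            S_mult M r s cmp d (S_mult M r s cmp d F G) H
          = S_mult M r s cmp d F (S_mult M r s cmp d G H))"
proof -
  interpret kg k M r s cmp d by (rule kg.intro[OF assms(1)])
  have c: "\<forall>F\<in>S_Lambda M r s cmp d. \<forall>G\<in>S_Lambda M r s cmp d.
            S_mult M r s cmp d F G \<in> S_Lambda M r s cmp d"
    using closed[OF assms(2)] by blast
  have a: "\<forall>F\<in>S_Lambda M r s cmp d. \<forall>G\<in>S_Lambda M r s cmp d. \<forall>H\<in>S_Lambda M r s cmp d.
            S_mult M r s cmp d (S_mult M r s cmp d F G) H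
          = S_mult M r s cmp d F (S_mult M r s cmp d G H)"
    using assoc_mult by blast
  show ?thesis by (rule conjI[OF c a])
qed

end
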